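(* Let $\mathcal E$ be a nest on a complex Banach space $X$ and let $\mathcal J$ be a $\mathcal T(\mathcal E)$-bimodule that is closed in the weak operator topology. Then $\mathcal J$ and $\mathcal M(\Phi_{\mathcal J})$ contain exactly the same finite rank operators.
   Context: A nest $\mathcal E$ on $X$ is a family of closed linear subspaces of $X$, totally ordered by inclusion, containing $\{0\}$ and $X$, closed under arbitrary meets (intersections) and joins (norm-closed linear spans of unions). $\mathcal T(\mathcal E)=\{T\in\mathcal B(X): TE\subseteq E\ \forall E\in\mathcal E\}$. A $\mathcal T(\mathcal E)$-bimodule is a linear subspace $\mathcal J\subseteq\mathcal B(X)$ with $\mathcal T(\mathcal E)\mathcal J\subseteq\mathcal J$ and $\mathcal J\mathcal T(\mathcal E)\subseteq\mathcal J$. $\Phi_{\mathcal J}:\mathcal E\to\mathcal E$ is $\Phi_{\mathcal J}(E)=[\mathcal JE]$, the norm-closed linear span of $\{Tx:T\in\mathcal J,x\in E\}$ (this lies in $\mathcal E$). For a map $\Phi:\mathcal E\to\mathcal E$, $\mathcal M(\Phi)=\{T\in\mathcal B(X): TE\subseteq\Phi(E)\ \forall E\in\mathcal E\}$. *)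

theory Defs
  imports "HOL-Analysis.Analysis"
begin

text \<open>A complex Banach space is
modelled as a real Banach space (type class banach) together with a complex scalar
multiplication cm extending the real one and compatible with the norm.\<close>

definition cbanach :: "(complex \<Rightarrow> 'a::banach \<Rightarrow> 'a) \<Rightarrow> bool" where
  "cbanach cm \<longleftrightarrow>
     (\<forall>c d x. cm (c + d) x = cm c x + cm d x) \<and>
     (\<forall>c x y. cm c (x + y) = cm c x + cm c y) \<and>
     (\<forall>c d x. cm (c * d) x = cm c (cm d x)) \<and>
     (\<forall>r x. cm (complex_of_real r) x = r *\<^sub>R x) \<and>
     (\<forall>c x. norm (cm c x) = cmod c * norm x)"

definition bop :: "(complex \<Rightarrow> 'a::banach \<Rightarrow> 'a) \<Rightarrow> ('a \<Rightarrow> 'a) \<Rightarrow> bool" where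
  "bop cm T \<longleftrightarrow> bounded_linear T \<and> (\<forall>c x. T (cm c x) = cm c (T x))"

definition csubspace :: "(complex \<Rightarrow> 'a::banach \<Rightarrow> 'a) \<Rightarrow> 'a set \<Rightarrow> bool" where
  "csubspace cm E \<longleftrightarrow> 0 \<in> E \<and> (\<forall>x\<in>E. \<forall>y\<in>E. x + y \<in> E) \<and> (\<forall>c. \<forall>x\<in>E. cm c x \<in> E)"

definition cspan :: "(complex \<Rightarrow> 'a::banach \<Rightarrow> 'a) \<Rightarrow> 'a set \<Rightarrow> 'a set" where
  "cspan cm A = \<Inter>{E. csubspace cm E \<and> A \<subseteq> E}"

definition cclspan :: "(complex \<Rightarrow> 'a::banach \<Rightarrow> 'a) \<Rightarrow> 'a set \<Rightarrow> 'a set" where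
  "cclspan cm A = closure (cspan cm A)"

definition nest :: "(complex \<Rightarrow> 'a::banach \<Rightarrow> 'a) \<Rightarrow> 'a set set \<Rightarrow> bool" where
  "nest cm N \<longleftrightarrow>
     (\<forall>E\<in>N. csubspace cm E \<and> closed E) \<and>
     (\<forall>E\<in>N. \<forall>F\<in>N. E \<subseteq> F \<or> F \<subseteq> E) \<and>
     {0} \<in> N \<and> UNIV \<in> N \<and>
     (\<forall>S. S \<subseteq> N \<longrightarrow> \<Inter>S \<in> N) \<and>
     (\<forall>S. S \<subseteq> N \<longrightarrow> cclspan cm (\<Union>S) \<in> N)"

definition nest_alg :: "(complex \<Rightarrow> 'a::banach \<Rightarrow> 'a) \<Rightarrow> 'a set set \<Rightarrow> ('a \<Rightarrow> 'a) set" where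
  "nest_alg cm N = {T. bop cm T \<and> (\<forall>E\<in>N. T ` E \<subseteq> E)}"

definition bimodule :: "(complex \<Rightarrow> 'a::banach \<Rightarrow> 'a) \<Rightarrow> 'a set set \<Rightarrow> ('a \<Rightarrow> 'a) set \<Rightarrow> bool" where
  "bimodule cm N J \<longleftrightarrow>
     (\<forall>T\<in>J. bop cm T) \<and> (\<lambda>x. 0) \<in> J \<and>
     (\<forall>S\<in>J. \<forall>T\<in>J. (\<lambda>x. S x + T x) \<in> J) \<and>
     (\<forall>c. \<forall>T\<in>J. (\<lambda>x. cm c (T x)) \<in> J) \<and>
     (\<forall>A\<in>nest_alg cm N. \<forall>T\<in>J. A \<circ> T \<in> J \<and> T \<circ> A \<in> J)"

definition cdual :: "(complex \<Rightarrow> 'a::banach \<Rightarrow> 'a) \<Rightarrow> ('a \<Rightarrow> complex) \<Rightarrow> bool" where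
  "cdual cm \<phi> \<longleftrightarrow> (\<forall>x y. \<phi> (x + y) = \<phi> x + \<phi> y) \<and> (\<forall>c x. \<phi> (cm c x) = c * \<phi> x) \<and>
     (\<exists>K. \<forall>x. cmod (\<phi> x) \<le> K * norm x)"

text \<open>Closedness in the weak operator topology of B(X): every operator in B(X) all of
whose basic WOT neighbourhoods (given by finitely many pairs x, phi and e > 0) meet J
lies in J.\<close>
definition wot_closed :: "(complex \<Rightarrow> 'a::banach \<Rightarrow> 'a) \<Rightarrow> ('a \<Rightarrow> 'a) set \<Rightarrow> bool" where
  "wot_closed cm J \<longleftrightarrow>
     (\<forall>T. bop cm T \<longrightarrow>
        (\<forall>F::('a \<times> ('a \<Rightarrow> complex)) set. finite F \<longrightarrow> (\<forall>(x,\<phi>)\<in>F. cdual cm \<phi>) \<longrightarrow>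
           (\<forall>e>0. \<exists>S\<in>J. \<forall>(x,\<phi>)\<in>F. cmod (\<phi> (S x) - \<phi> (T x)) < e)) \<longrightarrow> T \<in> J)"

definition PhiJ :: "(complex \<Rightarrow> 'a::banach \<Rightarrow> 'a) \<Rightarrow> ('a \<Rightarrow> 'a) set \<Rightarrow> 'a set \<Rightarrow> 'a set" where
  "PhiJ cm J E = cclspan cm {T x | T x. T \<in> J \<and> x \<in> E}"

definition Mphi :: "(complex \<Rightarrow> 'a::banach \<Rightarrow> 'a) \<Rightarrow> 'a set set \<Rightarrow> ('a set \<Rightarrow> 'a set) \<Rightarrow> ('a \<Rightarrow> 'a) set" where
  "Mphi cm N \<Phi> = {T. bop cm T \<and> (\<forall>E\<in>N. T ` E \<subseteq> \<Phi> E)}"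

definition finite_rank :: "(complex \<Rightarrow> 'a::banach \<Rightarrow> 'a) \<Rightarrow> ('a \<Rightarrow> 'a) \<Rightarrow> bool" where
  "finite_rank cm T \<longleftrightarrow> bop cm T \<and> (\<exists>B. finite B \<and> range T \<subseteq> cspan cm B)"

end

theory Submission
  imports Defs
begin


definition goodg :: "real \<Rightarrow> ('a::real_normed_vector \<times> real) set \<Rightarrow> bool" where
  "goodg C g \<longleftrightarrow> (\<forall>x a b. (x,a)\<in>g \<longrightarrow> (x,b)\<in>g \<longrightarrow> a = b) \<and>
     (\<forall>x a y b. (x,a)\<in>g \<longrightarrow> (y,b)\<in>g \<longrightarrow> (x+y, a+b) \<in> g) \<and>
     (\<forall>x a r. (x,a)\<in>g \<longrightarrow> (r *\<^sub>R x, r*a) \<in> g) \<and>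
     (\<forall>x a. (x,a)\<in>g \<longrightarrow> a \<le> C * norm x)"

lemma goodgD:
  assumes "goodg C g"
  shows "\<And>x a b. (x,a)\<in>g \<Longrightarrow> (x,b)\<in>g \<Longrightarrow> a = b"
   and "\<And>x a y b. (x,a)\<in>g \<Longrightarrow> (y,b)\<in>g \<Longrightarrow> (x+y, a+b) \<in> g"
   and "\<And>x a r. (x,a)\<in>g \<Longrightarrow> (r *\<^sub>R x, r*a) \<in> g"
   and "\<And>x a. (x,a)\<in>g \<Longrightarrow> a \<le> C * norm x"
  using assms unfolding goodg_def by blast+

lemma goodg_ext:
  fixes g :: "('a::real_normed_vector \<times> real) set"
  assumes C: "C \<ge> 0" and g: "goodg C g" and z0: "(0,0) \<in> g" and z: "z \<notin> Domain g"
  shows "\<exists>g'. goodg C g' \<and> g \<subseteq> g' \<and> z \<in> Domain g'"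
proof -
  have fn: "\<And>x a b. (x,a)\<in>g \<Longrightarrow> (x,b)\<in>g \<Longrightarrow> a = b"
   and add: "\<And>x a y b. (x,a)\<in>g \<Longrightarrow> (y,b)\<in>g \<Longrightarrow> (x+y, a+b) \<in> g"
   and sc: "\<And>x a r. (x,a)\<in>g \<Longrightarrow> (r *\<^sub>R x, r*a) \<in> g"
   and bd: "\<And>x a. (x,a)\<in>g \<Longrightarrow> a \<le> C * norm x"
    using goodgD[OF g] by blast+
  define L where "L = {a - C * norm (x - z) | x a. (x,a) \<in> g}"
  have ub: "a - C * norm (x - z) \<le> C * norm (y + z) - b" if "(x,a)\<in>g" "(y,b)\<in>g" for x a y b
  proof -
    have "a + b \<le> C * norm (x + y)" using bd[OF add[OF that]] .
    also have "norm (x + y) \<le> norm (x - z) + norm (y + z)"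
      using norm_triangle_ineq[of "x - z" "y + z"] by simp
    then have "C * norm (x + y) \<le> C * (norm (x - z) + norm (y + z))"
      using C by (simp add: mult_left_mono)
    finally show ?thesis by (simp add: algebra_simps)
  qed
  have Lne: "L \<noteq> {}" using z0 unfolding L_def by blast
  have Lbdd: "bdd_above L" unfolding L_def bdd_above_def using ub[OF _ z0] by force
  define c where "c = Sup L"
  have c_ge: "a - C * norm (x - z) \<le> c" if "(x,a)\<in>g" for x a
    unfolding c_def by (rule cSup_upper[OF _ Lbdd]) (use that L_def in blast)
  have c_le: "c \<le> C * norm (y + z) - b" if "(y,b)\<in>g" for y b
    unfolding c_def by (rule cSup_least[OF Lne]) (use ub that L_def in blast)
  define g' where "g' = {(x + t *\<^sub>R z, a + t * c) | x a t. (x,a) \<in> g}"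
  have sub: "g \<subseteq> g'" unfolding g'_def by force
  have zin: "z \<in> Domain g'" unfolding g'_def using z0 by (force intro!: DomainI[where b="0 + 1*c"])
  have fun': "a = b" if "(x,a)\<in>g'" "(x,b)\<in>g'" for x a b
  proof -
    from that(1) obtain x1 a1 t1 where 1: "x = x1 + t1 *\<^sub>R z" "a = a1 + t1 * c" "(x1,a1)\<in>g" unfolding g'_def by blast
    from that(2) obtain x2 a2 t2 where 2: "x = x2 + t2 *\<^sub>R z" "b = a2 + t2 * c" "(x2,a2)\<in>g" unfolding g'_def by blast
    have d: "(x1 - x2, a1 - a2) \<in> g" using add[OF 1(3) sc[OF 2(3), of "-1"]] by simp
    show ?thesis
    proof (cases "t1 = t2")
      case True
      then have "x1 = x2" using 1 2 by simp
      then show ?thesis using fn 1 2 True by auto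
    next
      case False
      have "x1 - x2 = (t2 - t1) *\<^sub>R z" using 1 2 by (simp add: algebra_simps)
      then have "z = (1/(t2 - t1)) *\<^sub>R (x1 - x2)" using False by simp
      then have "z \<in> Domain g" using sc[OF d, of "1/(t2-t1)"] by (metis Domain.DomainI)
      then show ?thesis using z by blast
    qed
  qed
  have add': "(x+y, a+b) \<in> g'" if "(x,a)\<in>g'" "(y,b)\<in>g'" for x a y b
  proof -
    from that(1) obtain x1 a1 t1 where 1: "x = x1 + t1 *\<^sub>R z" "a = a1 + t1 * c" "(x1,a1)\<in>g" unfolding g'_def by blast
    from that(2) obtain x2 a2 t2 where 2: "y = x2 + t2 *\<^sub>R z" "b = a2 + t2 * c" "(x2,a2)\<in>g" unfolding g'_def by blast
    have "x + y = (x1 + x2) + (t1 + t2) *\<^sub>R z" "a + b = (a1 + a2) + (t1 + t2) * c"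
      using 1 2 by (simp_all add: algebra_simps)
    then show ?thesis unfolding g'_def using add[OF 1(3) 2(3)] by blast
  qed
  have sc': "(r *\<^sub>R x, r*a) \<in> g'" if "(x,a)\<in>g'" for x a r
  proof -
    from that(1) obtain x1 a1 t1 where 1: "x = x1 + t1 *\<^sub>R z" "a = a1 + t1 * c" "(x1,a1)\<in>g" unfolding g'_def by blast
    have "r *\<^sub>R x = r *\<^sub>R x1 + (r * t1) *\<^sub>R z" "r * a = r * a1 + (r * t1) * c"
      using 1 by (simp_all add: algebra_simps)
    then show ?thesis unfolding g'_def using sc[OF 1(3)] by blast
  qed
  have bd': "a \<le> C * norm x" if "(x,a)\<in>g'" for x a
  proof -
    from that(1) obtain x1 a1 t where 1: "x = x1 + t *\<^sub>R z" "a = a1 + t * c" "(x1,a1)\<in>g" unfolding g'_def by blast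
    consider "t = 0" | "t > 0" | "t < 0" by linarith
    then show ?thesis
    proof cases
      case 1 then show ?thesis using bd \<open>(x1,a1)\<in>g\<close> \<open>x = _\<close> \<open>a = _\<close> by simp
    next
      case 2
      have "c \<le> C * norm ((1/t) *\<^sub>R x1 + z) - (1/t) * a1" using c_le[OF sc[OF \<open>(x1,a1)\<in>g\<close>, of "1/t"]] by simp
      then have "t * c \<le> t * (C * norm ((1/t) *\<^sub>R x1 + z) - (1/t) * a1)" using 2 by (simp add: mult_left_mono)
      also have "\<dots> = C * (t * norm ((1/t) *\<^sub>R x1 + z)) - a1" using 2 by (simp add: algebra_simps)
      also have "t * norm ((1/t) *\<^sub>R x1 + z) = norm (t *\<^sub>R ((1/t) *\<^sub>R x1 + z))" using 2 by simp
      also have "t *\<^sub>R ((1/t) *\<^sub>R x1 + z) = x1 + t *\<^sub>R z" using 2 by (simp add: scaleR_add_right)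
      finally show ?thesis using 1 by simp
    next
      case 3
      define s where "s = - t"
      have s: "s > 0" using 3 s_def by simp
      define Nn where "Nn = norm ((1/s) *\<^sub>R x1 - z)"
      have "(1/s) * a1 - C * Nn \<le> c" unfolding Nn_def using c_ge[OF sc[OF \<open>(x1,a1)\<in>g\<close>, of "1/s"]] by simp
      then have i: "s * ((1/s) * a1 - C * Nn) \<le> s * c" using s by (simp add: mult_left_mono)
      have e: "s * ((1/s) * a1 - C * Nn) = a1 - C * (s * Nn)" using s by (simp add: algebra_simps)
      have "s * Nn = norm (s *\<^sub>R ((1/s) *\<^sub>R x1 - z))" unfolding Nn_def using s by simp
      also have "s *\<^sub>R ((1/s) *\<^sub>R x1 - z) = x1 - s *\<^sub>R z" using s by (simp add: scaleR_diff_right)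
      also have "x1 - s *\<^sub>R z = x1 + t *\<^sub>R z" unfolding s_def by simp
      finally have "s * Nn = norm (x1 + t *\<^sub>R z)" .
      then have "a1 - C * norm (x1 + t *\<^sub>R z) \<le> s * c" using i e by simp
      then show ?thesis using 1 unfolding s_def by simp
    qed
  qed
  have "goodg C g'" unfolding goodg_def using fun' add' sc' bd' by blast
  then show ?thesis using sub zin by blast
qed

lemma real_hb:
  fixes g0 :: "('a::real_normed_vector \<times> real) set"
  assumes C: "C \<ge> 0" and g0: "goodg C g0" and z0: "(0,0) \<in> g0"
  shows "\<exists>h. (\<forall>x y. h (x+y) = h x + h y) \<and> (\<forall>r x. h (r *\<^sub>R x) = r * h x) \<and>
     (\<forall>x. h x \<le> C * norm x) \<and> (\<forall>x a. (x,a)\<in>g0 \<longrightarrow> h x = a)"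
proof -
  define A where "A = {g. g0 \<subseteq> g \<and> goodg C g}"
  have "\<forall>Ch\<in>chains A. \<exists>U\<in>A. \<forall>X\<in>Ch. X \<subseteq> U"
  proof
    fix Ch assume Ch: "Ch \<in> chains A"
    then have ChA: "Ch \<subseteq> A" and chain: "\<And>X Y. X \<in> Ch \<Longrightarrow> Y \<in> Ch \<Longrightarrow> X \<subseteq> Y \<or> Y \<subseteq> X"
      unfolding chains_def chain_subset_def by auto
    show "\<exists>U\<in>A. \<forall>X\<in>Ch. X \<subseteq> U"
    proof (cases "Ch = {}")
      case True then show ?thesis using g0 A_def by auto
    next
      case False
      have gd: "\<And>X. X \<in> Ch \<Longrightarrow> goodg C X" and g0X: "\<And>X. X \<in> Ch \<Longrightarrow> g0 \<subseteq> X" using ChA A_def by auto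
      have two: "\<exists>X\<in>Ch. p \<in> X \<and> q \<in> X" if "p \<in> \<Union>Ch" "q \<in> \<Union>Ch" for p q
        using that chain by blast
      have "goodg C (\<Union>Ch)" unfolding goodg_def
      proof (intro conjI allI impI)
        fix x a b assume "(x,a) \<in> \<Union>Ch" "(x,b) \<in> \<Union>Ch"
        then obtain X where "X \<in> Ch" "(x,a)\<in>X" "(x,b)\<in>X" using two by blast
        then show "a = b" using goodgD(1)[OF gd[of X]] by blast
      next
        fix x a y b assume "(x,a) \<in> \<Union>Ch" "(y,b) \<in> \<Union>Ch"
        then obtain X where "X \<in> Ch" "(x,a)\<in>X" "(y,b)\<in>X" using two by blast
        then show "(x+y,a+b) \<in> \<Union>Ch" using goodgD(2)[OF gd[of X]] \<open>X \<in> Ch\<close> by blast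
      next
        fix x a r assume "(x,a) \<in> \<Union>Ch"
        then obtain X where "X \<in> Ch" "(x,a)\<in>X" by blast
        then show "(r *\<^sub>R x, r*a) \<in> \<Union>Ch" using goodgD(3)[OF gd[of X]] by blast
      next
        fix x a assume "(x,a) \<in> \<Union>Ch"
        then obtain X where "X \<in> Ch" "(x,a)\<in>X" by blast
        then show "a \<le> C * norm x" using goodgD(4)[OF gd[of X]] by blast
      qed
      moreover have "g0 \<subseteq> \<Union>Ch" using False g0X by blast
      ultimately show ?thesis unfolding A_def by blast
    qed
  qed
  then obtain M where MA: "M \<in> A" and max: "\<forall>X\<in>A. M \<subseteq> X \<longrightarrow> X = M" using Zorn_Lemma2 by blast
  have gM: "goodg C M" and g0M: "g0 \<subseteq> M" using MA A_def by auto
  have dom: "x \<in> Domain M" for x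
  proof (rule ccontr)
    assume "x \<notin> Domain M"
    moreover have "(0,0) \<in> M" using z0 g0M by blast
    ultimately obtain g' where "goodg C g'" "M \<subseteq> g'" "x \<in> Domain g'" using goodg_ext[OF C gM] by blast
    moreover have "g' \<in> A" using calculation g0M A_def by blast
    ultimately have "g' = M" using max by blast
    then show False using \<open>x \<notin> Domain M\<close> \<open>x \<in> Domain g'\<close> by simp
  qed
  define h where "h x = (THE a. (x,a) \<in> M)" for x
  have hM: "(x, h x) \<in> M" for x
  proof -
    obtain a where a: "(x,a) \<in> M" using dom by blast
    have "h x = a" unfolding h_def using a goodgD(1)[OF gM] by blast
    then show ?thesis using a by simp
  qed
  have hu: "h x = a" if "(x,a)\<in>M" for x a using hM[of x] that goodgD(1)[OF gM] by blast
  show ?thesis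
  proof (intro exI conjI allI impI)
    show "h (x + y) = h x + h y" for x y using hu goodgD(2)[OF gM hM hM] by blast
    show "h (r *\<^sub>R x) = r * h x" for r x using hu goodgD(3)[OF gM hM] by blast
    show "h x \<le> C * norm x" for x using goodgD(4)[OF gM hM] by blast
    show "h x = a" if "(x,a)\<in>g0" for x a using hu g0M that by blast
  qed
qed




locale cbs =
  fixes cm :: "complex \<Rightarrow> 'a::banach \<Rightarrow> 'a"
  assumes cb: "cbanach cm"
begin

lemma cm_add_l: "cm (c + d) x = cm c x + cm d x" using cb by (simp add: cbanach_def)
lemma cm_add_r: "cm c (x + y) = cm c x + cm c y" using cb by (simp add: cbanach_def)
lemma cm_mult: "cm (c * d) x = cm c (cm d x)" using cb by (simp add: cbanach_def)
lemma cm_real: "cm (complex_of_real r) x = r *\<^sub>R x" using cb by (simp add: cbanach_def)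
lemma cm_norm: "norm (cm c x) = cmod c * norm x" using cb by (simp add: cbanach_def)

lemma cm_one[simp]: "cm 1 x = x" using cm_real[of 1 x] by simp
lemma cm_zero_l[simp]: "cm 0 x = 0" using cm_real[of 0 x] by simp
lemma cm_zero_r[simp]: "cm c 0 = 0" using cm_add_r[of c 0 0] by simp
lemma cm_minus_r: "cm c (- x) = - cm c x"
  using cm_add_r[of c x "-x"] minus_unique[of "cm c x" "cm c (-x)"] by simp
lemma cm_diff_r: "cm c (x - y) = cm c x - cm c y"
  using cm_add_r[of c x "-y"] cm_minus_r by simp
lemma cm_minus_l: "cm (- c) x = - cm c x"
  using cm_add_l[of c "-c" x] minus_unique[of "cm c x" "cm (-c) x"] by simp
lemma cm_diff_l: "cm (c - d) x = cm c x - cm d x"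
  using cm_add_l[of c "-d" x] cm_minus_l by simp
lemma cm_scaleR: "cm c (r *\<^sub>R x) = r *\<^sub>R cm c x"
  by (metis cm_mult cm_real mult.commute)
lemma cm_inv: "c \<noteq> 0 \<Longrightarrow> cm (inverse c) (cm c x) = x"
  by (metis cm_mult cm_one left_inverse)

lemma bl_cm: "bounded_linear (cm c)"
  by (rule bounded_linear_intro[where K="cmod c"]) (auto simp: cm_add_r cm_scaleR cm_norm mult.commute)

lemma bl_cm_l: "bounded_linear (\<lambda>c. cm c p)"
  apply (rule bounded_linear_intro[where K="norm p"])
    apply (auto simp: cm_add_l cm_norm)
  by (metis cm_mult cm_real scaleR_conv_of_real)

lemma csub_add: "csubspace cm E \<Longrightarrow> x \<in> E \<Longrightarrow> y \<in> E \<Longrightarrow> x + y \<in> E"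
  by (simp add: csubspace_def)
lemma csub_cm: "csubspace cm E \<Longrightarrow> x \<in> E \<Longrightarrow> cm c x \<in> E"
  by (simp add: csubspace_def)
lemma csub_0: "csubspace cm E \<Longrightarrow> 0 \<in> E"
  by (simp add: csubspace_def)
lemma csub_minus: "csubspace cm E \<Longrightarrow> x \<in> E \<Longrightarrow> - x \<in> E"
  using csub_cm[of E x "-1"] cm_minus_l[of 1 x] by simp
lemma csub_diff: "csubspace cm E \<Longrightarrow> x \<in> E \<Longrightarrow> y \<in> E \<Longrightarrow> x - y \<in> E"
  using csub_add csub_minus by fastforce
lemma csub_scaleR: "csubspace cm E \<Longrightarrow> x \<in> E \<Longrightarrow> r *\<^sub>R x \<in> E"
  using csub_cm[of E x "of_real r"] cm_real by simp
lemma csub_UNIV: "csubspace cm UNIV" by (simp add: csubspace_def)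

lemma cspan_sup: "A \<subseteq> cspan cm A" by (auto simp: cspan_def)
lemma cspan_csub: "csubspace cm (cspan cm A)"
  by (auto simp: cspan_def csubspace_def)
lemma cspan_least: "csubspace cm E \<Longrightarrow> A \<subseteq> E \<Longrightarrow> cspan cm A \<subseteq> E"
  by (auto simp: cspan_def)
lemma cspan_mono: "A \<subseteq> B \<Longrightarrow> cspan cm A \<subseteq> cspan cm B"
  by (meson cspan_csub cspan_least cspan_sup order_trans)

lemma closure_csub: assumes "csubspace cm S" shows "csubspace cm (closure S)"
proof -
  have c1: "x + y \<in> closure S" if "x \<in> closure S" "y \<in> closure S" for x y
  proof -
    have "S \<subseteq> (\<lambda>y. s + y) -` closure S" if "s \<in> S" for s
      using assms that closure_subset csub_add by fastforce
    then have A: "closure S \<subseteq> (\<lambda>y. s + y) -` closure S" if "s \<in> S" for s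
      by (intro closure_minimal continuous_closed_vimage) (auto intro: continuous_intros that)
    have "S \<subseteq> (\<lambda>x. x + y) -` closure S" using A that(2) by (auto simp: add.commute)
    then have "closure S \<subseteq> (\<lambda>x. x + y) -` closure S"
      by (intro closure_minimal continuous_closed_vimage) (auto intro: continuous_intros)
    then show ?thesis using that by auto
  qed
  have c2: "cm c x \<in> closure S" if "x \<in> closure S" for x c
  proof -
    have "S \<subseteq> cm c -` closure S" using assms closure_subset csub_cm by fastforce
    then have "closure S \<subseteq> cm c -` closure S"
      by (intro closure_minimal continuous_closed_vimage linear_continuous_at bl_cm) auto
    then show ?thesis using that by auto
  qed
  show ?thesis using c1 c2 assms closure_subset unfolding csubspace_def by blast
qed

lemma cclspan_csub: "csubspace cm (cclspan cm A)"
  unfolding cclspan_def by (rule closure_csub[OF cspan_csub])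

lemma cspan_sum: assumes "csubspace cm K"
  shows "cspan cm (K \<union> Q) = {k + w | k w. k \<in> K \<and> w \<in> cspan cm Q}" (is "_ = ?R")
proof
  have "csubspace cm ?R"
    unfolding csubspace_def
  proof (intro conjI ballI allI)
    show "0 \<in> ?R" using assms cspan_csub[of Q] by (force simp: csubspace_def)
    fix x y assume "x \<in> ?R" "y \<in> ?R"
    then obtain k w k' w' where "x = k + w" "y = k' + w'" "k \<in> K" "k' \<in> K" "w \<in> cspan cm Q" "w' \<in> cspan cm Q" by auto
    then show "x + y \<in> ?R"
      using csub_add[OF assms] csub_add[OF cspan_csub]
      by (smt (verit, best) add.assoc add.left_commute mem_Collect_eq)
  next
    fix c x assume "x \<in> ?R"
    then obtain k w where "x = k + w" "k \<in> K" "w \<in> cspan cm Q" by auto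
    then show "cm c x \<in> ?R" using csub_cm[OF assms] csub_cm[OF cspan_csub] cm_add_r by blast
  qed
  moreover have "K \<union> Q \<subseteq> ?R"
  proof -
    have "K \<subseteq> ?R" using cspan_csub[of Q] by (force simp: csubspace_def)
    moreover have "Q \<subseteq> ?R" using assms cspan_sup[of Q] by (force simp: csubspace_def)
    ultimately show ?thesis by auto
  qed
  ultimately show "cspan cm (K \<union> Q) \<subseteq> ?R" by (rule cspan_least)
next
  show "?R \<subseteq> cspan cm (K \<union> Q)"
  proof
    fix x assume "x \<in> ?R"
    then obtain k w where "x = k + w" "k \<in> K" "w \<in> cspan cm Q" by auto
    moreover have "k \<in> cspan cm (K \<union> Q)" using \<open>k \<in> K\<close> cspan_sup by blast
    moreover have "w \<in> cspan cm (K \<union> Q)" using \<open>w \<in> cspan cm Q\<close> cspan_mono[of Q "K \<union> Q"] by auto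
    ultimately show "x \<in> cspan cm (K \<union> Q)" using csub_add[OF cspan_csub] by blast
  qed
qed

lemma cspan_single: "cspan cm {p} = range (\<lambda>c. cm c p)"
proof
  have "csubspace cm (range (\<lambda>c. cm c p))"
    unfolding csubspace_def
    by (auto simp: cm_add_l[symmetric] cm_mult[symmetric] intro: range_eqI[where x=0])
  moreover have "p \<in> range (\<lambda>c. cm c p)" using cm_one by (metis rangeI)
  ultimately show "cspan cm {p} \<subseteq> range (\<lambda>c. cm c p)" by (intro cspan_least) auto
  show "range (\<lambda>c. cm c p) \<subseteq> cspan cm {p}"
    using csub_cm[OF cspan_csub] cspan_sup by blast
qed

lemma cspan_insert: "cspan cm (F \<union> insert p Q) = cspan cm (cspan cm (F \<union> Q) \<union> {p})"
proof
  show "cspan cm (F \<union> insert p Q) \<subseteq> cspan cm (cspan cm (F \<union> Q) \<union> {p})"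
    apply (rule cspan_least[OF cspan_csub])
    using cspan_sup[of "F \<union> Q"] cspan_sup[of "cspan cm (F \<union> Q) \<union> {p}"] by auto
  show "cspan cm (cspan cm (F \<union> Q) \<union> {p}) \<subseteq> cspan cm (F \<union> insert p Q)"
    apply (rule cspan_least[OF cspan_csub])
    using cspan_mono[of "F \<union> Q" "F \<union> insert p Q"] cspan_sup[of "F \<union> insert p Q"] by auto
qed

end



context cbs begin

lemma cm_decomp: "cm c x = Re c *\<^sub>R x + Im c *\<^sub>R cm \<i> x"
proof -
  have "c = complex_of_real (Re c) + complex_of_real (Im c) * \<i>" by (simp add: complex_eq_iff)
  then have "cm c x = cm (complex_of_real (Re c)) x + cm (complex_of_real (Im c) * \<i>) x"
    by (metis cm_add_l)
  then show ?thesis by (simp add: cm_mult cm_real)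
qed

lemma chb:
  assumes cl: "closed M" and sub: "csubspace cm M" and u: "u \<notin> M"
  shows "\<exists>f. cdual cm f \<and> (\<forall>m\<in>M. f m = 0) \<and> f u = 1"
proof -
  have M0: "0 \<in> M" using sub csub_0 by blast
  define d where "d = infdist u M"
  have d: "d > 0" unfolding d_def using infdist_pos_not_in_closed[OF cl _ u] M0 by blast
  define C where "C = 1 / d"
  have C: "C \<ge> 0" using d C_def by simp
  define g0 where "g0 = {(m + t *\<^sub>R u, t) | m t. m \<in> M}"
  have fn: "t = t'" if "m \<in> M" "m' \<in> M" "m + t *\<^sub>R u = m' + t' *\<^sub>R u" for m m' t t'
  proof (rule ccontr)
    assume ne: "t \<noteq> t'"
    have "(t - t') *\<^sub>R u = m' - m" using that(3) by (simp add: algebra_simps)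
    then have "(1/(t - t')) *\<^sub>R ((t - t') *\<^sub>R u) = (1/(t - t')) *\<^sub>R (m' - m)" by simp
    then have "u = (1/(t - t')) *\<^sub>R (m' - m)" using ne by simp
    then have "u \<in> M" using csub_scaleR[OF sub csub_diff[OF sub that(2) that(1)]] by simp
    then show False using u by simp
  qed
  have bd: "t \<le> C * norm (m + t *\<^sub>R u)" if "m \<in> M" for m t
  proof (cases "t = 0")
    case True then show ?thesis using C by simp
  next
    case False
    have mm: "- ((1/t) *\<^sub>R m) \<in> M" using csub_minus[OF sub csub_scaleR[OF sub that]] .
    have "d \<le> dist u (- ((1/t) *\<^sub>R m))" unfolding d_def by (rule infdist_le[OF mm])
    also have "dist u (- ((1/t) *\<^sub>R m)) = norm (u + (1/t) *\<^sub>R m)" by (simp add: dist_norm)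
    finally have "\<bar>t\<bar> * d \<le> \<bar>t\<bar> * norm (u + (1/t) *\<^sub>R m)" by (simp add: mult_left_mono)
    also have "\<bar>t\<bar> * norm (u + (1/t) *\<^sub>R m) = norm (t *\<^sub>R (u + (1/t) *\<^sub>R m))" by simp
    also have "t *\<^sub>R (u + (1/t) *\<^sub>R m) = m + t *\<^sub>R u" using False by (simp add: scaleR_add_right)
    finally have "\<bar>t\<bar> * d \<le> norm (m + t *\<^sub>R u)" .
    then have "\<bar>t\<bar> \<le> norm (m + t *\<^sub>R u) / d" using d by (simp add: le_divide_eq)
    then show ?thesis unfolding C_def by simp
  qed
  have g0: "goodg C g0" unfolding goodg_def
  proof (intro conjI allI impI)
    fix x a b assume "(x,a) \<in> g0" "(x,b) \<in> g0"
    then show "a = b" unfolding g0_def using fn by blast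
  next
    fix x a y b assume "(x,a) \<in> g0" "(y,b) \<in> g0"
    then obtain m m' where "x = m + a *\<^sub>R u" "y = m' + b *\<^sub>R u" "m \<in> M" "m' \<in> M" unfolding g0_def by blast
    moreover then have "x + y = (m + m') + (a + b) *\<^sub>R u" by (simp add: algebra_simps)
    ultimately show "(x + y, a + b) \<in> g0" unfolding g0_def using csub_add[OF sub] by blast
  next
    fix x a r assume "(x,a) \<in> g0"
    then obtain m where "x = m + a *\<^sub>R u" "m \<in> M" unfolding g0_def by blast
    moreover then have "r *\<^sub>R x = r *\<^sub>R m + (r * a) *\<^sub>R u" by (simp add: algebra_simps)
    ultimately show "(r *\<^sub>R x, r * a) \<in> g0" unfolding g0_def using csub_scaleR[OF sub] by blast
  next
    fix x a assume "(x,a) \<in> g0"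
    then show "a \<le> C * norm x" unfolding g0_def using bd by blast
  qed
  have inM: "(m + t *\<^sub>R u, t) \<in> g0" if "m \<in> M" for m t unfolding g0_def using that by blast
  have z0: "(0,0) \<in> g0" using inM[OF M0, of 0] by simp
  obtain h where hadd: "\<And>x y. h (x+y) = h x + h y" and hsc: "\<And>r x. h (r *\<^sub>R x) = r * h x"
    and hb: "\<And>x. h x \<le> C * norm x" and hg: "\<And>x a. (x,a)\<in>g0 \<Longrightarrow> h x = a"
    using real_hb[OF C g0 z0] by blast
  have habs: "\<bar>h x\<bar> \<le> C * norm x" for x
    using hb[of x] hb[of "-x"] hsc[of "-1" x] by simp
  have hdiff: "h (x - y) = h x - h y" for x y using hadd[of "x - y" y] by simp
  have hM: "h m = 0" if "m \<in> M" for m using hg inM[OF that, of 0] by simp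
  have hu: "h u = 1" using hg inM[OF M0, of 1] by simp
  define f0 where "f0 x = Complex (h x) (- h (cm \<i> x))" for x
  have f0add: "f0 (x + y) = f0 x + f0 y" for x y
    unfolding f0_def by (simp add: hadd cm_add_r complex_eq_iff)
  have f0cm: "f0 (cm c x) = c * f0 x" for c x
  proof -
    have 1: "h (cm c x) = Re c * h x + Im c * h (cm \<i> x)" by (simp add: cm_decomp[of c x] hadd hsc)
    have "cm \<i> (cm c x) = cm (\<i> * c) x" by (simp add: cm_mult)
    then have 2: "h (cm \<i> (cm c x)) = - Im c * h x + Re c * h (cm \<i> x)" by (simp add: cm_decomp[of "\<i> * c" x] hadd hsc hdiff)
    show ?thesis unfolding f0_def using 1 2 by (simp add: complex_eq_iff algebra_simps)
  qed
  have f0b: "cmod (f0 x) \<le> (2 * C) * norm x" for x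
  proof -
    have "cmod (f0 x) \<le> \<bar>h x\<bar> + \<bar>h (cm \<i> x)\<bar>" unfolding f0_def
      using cmod_le[of "Complex (h x) (- h (cm \<i> x))"] by simp
    also have "\<dots> \<le> C * norm x + C * norm x" using habs[of x] habs[of "cm \<i> x"] by (simp add: cm_norm)
    finally show ?thesis by simp
  qed
  have f0M: "f0 m = 0" if "m \<in> M" for m
    unfolding f0_def using hM[OF that] hM[OF csub_cm[OF sub that]] by (simp add: complex_eq_iff)
  have f0u: "f0 u \<noteq> 0" unfolding f0_def using hu by (simp add: complex_eq_iff)
  define f where "f x = f0 x / f0 u" for x
  have "cdual cm f" unfolding cdual_def
  proof (intro conjI allI)
    show "f (x + y) = f x + f y" for x y unfolding f_def by (simp add: f0add add_divide_distrib)
    show "f (cm c x) = c * f x" for c x unfolding f_def by (simp add: f0cm)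
    show "\<exists>K. \<forall>x. cmod (f x) \<le> K * norm x"
    proof (intro exI allI)
      fix x
      have "cmod (f x) = cmod (f0 x) / cmod (f0 u)" unfolding f_def by (simp add: norm_divide)
      also have "\<dots> \<le> (2 * C) * norm x / cmod (f0 u)" using f0u f0b by (simp add: divide_right_mono)
      finally show "cmod (f x) \<le> (2 * C / cmod (f0 u)) * norm x" by simp
    qed
  qed
  moreover have "\<forall>m\<in>M. f m = 0" unfolding f_def using f0M by simp
  moreover have "f u = 1" unfolding f_def using f0u by simp
  ultimately show ?thesis by blast
qed

end



context cbs begin

lemma cdual_add: "cdual cm f \<Longrightarrow> f (x + y) = f x + f y" by (simp add: cdual_def)
lemma cdual_cm: "cdual cm f \<Longrightarrow> f (cm c x) = c * f x" by (simp add: cdual_def)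

lemma cdual_bl: assumes "cdual cm f" shows "bounded_linear f"
proof -
  obtain K where K: "\<And>x. cmod (f x) \<le> K * norm x" using assms by (auto simp: cdual_def)
  show ?thesis
  proof (rule bounded_linear_intro[where K=K])
    show "f (x + y) = f x + f y" for x y using cdual_add[OF assms] .
    show "f (r *\<^sub>R x) = r *\<^sub>R f x" for r x
      using cdual_cm[OF assms, of "complex_of_real r" x] by (simp add: cm_real scaleR_conv_of_real)
    show "norm (f x) \<le> norm x * K" for x using K[of x] by (simp add: mult.commute)
  qed
qed

lemma cspan_self: "csubspace cm L \<Longrightarrow> cspan cm L = L"
  using cspan_least cspan_sup by blast

lemma closed_span_insert:
  assumes cl: "closed L" and sub: "csubspace cm L"
  shows "closed (cspan cm (L \<union> {p}))"
proof (cases "p \<in> L")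
  case True
  then have "L \<union> {p} \<subseteq> L" by blast
  then have "cspan cm (L \<union> {p}) \<subseteq> L" by (rule cspan_least[OF sub])
  moreover have "L \<subseteq> cspan cm (L \<union> {p})" using cspan_sup[of "L \<union> {p}"] by blast
  ultimately have "cspan cm (L \<union> {p}) = L" by (rule equalityI)
  then show ?thesis using cl by simp
next
  case False
  obtain f where f: "cdual cm f" "\<forall>m\<in>L. f m = 0" "f p = 1" using chb[OF cl sub False] by blast
  have eq: "cspan cm (L \<union> {p}) = (\<lambda>x. x - cm (f x) p) -` L"
  proof
    show "cspan cm (L \<union> {p}) \<subseteq> (\<lambda>x. x - cm (f x) p) -` L"
    proof
      fix x assume "x \<in> cspan cm (L \<union> {p})"
      then obtain l w where lw: "x = l + w" "l \<in> L" "w \<in> cspan cm {p}" unfolding cspan_sum[OF sub] by blast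
      from lw(3) obtain c where c: "w = cm c p" unfolding cspan_single by blast
      have "f x = f l + f (cm c p)" using lw(1) c cdual_add[OF f(1)] by simp
      also have "\<dots> = c" using f(2) lw(2) cdual_cm[OF f(1)] f(3) by simp
      finally have "x - cm (f x) p = l" using lw(1) c by simp
      then show "x \<in> (\<lambda>x. x - cm (f x) p) -` L" using lw(2) by simp
    qed
    show "(\<lambda>x. x - cm (f x) p) -` L \<subseteq> cspan cm (L \<union> {p})"
    proof
      fix x assume "x \<in> (\<lambda>x. x - cm (f x) p) -` L"
      then have 1: "x - cm (f x) p \<in> L" by simp
      have 2: "cm (f x) p \<in> cspan cm {p}" unfolding cspan_single by blast
      have "(x - cm (f x) p) + cm (f x) p \<in> {k + w |k w. k \<in> L \<and> w \<in> cspan cm {p}}" using 1 2 by blast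
      then have "(x - cm (f x) p) + cm (f x) p \<in> cspan cm (L \<union> {p})" unfolding cspan_sum[OF sub] .
      then show "x \<in> cspan cm (L \<union> {p})" by simp
    qed
  qed
  have bl: "bounded_linear (\<lambda>x. cm (f x) p)"
    using bounded_linear_compose[OF bl_cm_l cdual_bl[OF f(1)]] .
  have bl2: "bounded_linear (\<lambda>x. x - cm (f x) p)" by (rule bounded_linear_sub[OF bounded_linear_ident bl])
  have "closed ((\<lambda>x. x - cm (f x) p) -` L)"
    by (rule continuous_closed_vimage[OF cl linear_continuous_at[OF bl2]])
  then show ?thesis using eq by simp
qed

lemma closed_span_fin:
  assumes "finite Q" "closed G" "csubspace cm G"
  shows "closed (cspan cm (G \<union> Q))"
  using assms(1)
proof (induction Q)
  case empty then show ?case using cspan_self[OF assms(3)] assms(2) by simp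
next
  case (insert p Q)
  have e: "cspan cm (G \<union> insert p Q) = cspan cm (cspan cm (G \<union> Q) \<union> {p})" by (rule cspan_insert)
  show ?case unfolding e by (rule closed_span_insert[OF insert.IH cspan_csub])
qed

lemma chain_span:
  assumes "finite Q" and ch: "\<And>F F'. F \<in> C \<Longrightarrow> F' \<in> C \<Longrightarrow> F \<subseteq> F' \<or> F' \<subseteq> F"
    and csC: "\<And>F. F \<in> C \<Longrightarrow> csubspace cm F"
  shows "(\<forall>F\<in>C. v \<in> cspan cm (F \<union> Q)) \<Longrightarrow> v \<in> cspan cm (\<Inter>C \<union> Q)"
  using assms(1)
proof (induction Q arbitrary: v)
  case empty
  have "v \<in> F" if "F \<in> C" for F using empty.prems that cspan_self[OF csC[OF that]] by auto
  then have "v \<in> \<Inter>C" by blast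
  then show ?case using cspan_sup[of "\<Inter>C"] by auto
next
  case (insert p Q)
  have span_ins: "\<And>F. cspan cm (F \<union> insert p Q) = cspan cm (cspan cm (F \<union> Q) \<union> {p})" by (rule cspan_insert)
  have rep: "\<exists>l c. l \<in> cspan cm (F \<union> Q) \<and> v = l + cm c p" if "F \<in> C" for F
  proof -
    have "v \<in> cspan cm (F \<union> insert p Q)" using insert.prems that by blast
    then have "v \<in> cspan cm (cspan cm (F \<union> Q) \<union> {p})" unfolding span_ins[of F] .
    then obtain l w where "v = l + w" "l \<in> cspan cm (F \<union> Q)" "w \<in> cspan cm {p}"
      unfolding cspan_sum[OF cspan_csub] by blast
    moreover from this(3) obtain c where "w = cm c p" unfolding cspan_single by blast
    ultimately show ?thesis by blast
  qed
  have goal: "v \<in> cspan cm (\<Inter>C \<union> insert p Q)" if h: "v' \<in> cspan cm (\<Inter>C \<union> Q)" "v = v' + cm c p" for v' c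
  proof -
    have "v' \<in> cspan cm (\<Inter>C \<union> insert p Q)" using h(1) cspan_mono[of "\<Inter>C \<union> Q" "\<Inter>C \<union> insert p Q"] by auto
    moreover have "cm c p \<in> cspan cm (\<Inter>C \<union> insert p Q)"
      using csub_cm[OF cspan_csub] cspan_sup[of "\<Inter>C \<union> insert p Q"] by blast
    ultimately show ?thesis using h(2) csub_add[OF cspan_csub] by blast
  qed
  show ?case
  proof (cases "\<exists>F0\<in>C. p \<notin> cspan cm (F0 \<union> Q)")
    case True
    then obtain F0 where F0: "F0 \<in> C" "p \<notin> cspan cm (F0 \<union> Q)" by blast
    obtain l0 c0 where l0: "l0 \<in> cspan cm (F0 \<union> Q)" "v = l0 + cm c0 p" using rep[OF F0(1)] by blast
    have "\<forall>F\<in>C. v - cm c0 p \<in> cspan cm (F \<union> Q)"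
    proof
      fix F assume F: "F \<in> C"
      show "v - cm c0 p \<in> cspan cm (F \<union> Q)"
      proof (cases "F0 \<subseteq> F")
        case True
        then have "l0 \<in> cspan cm (F \<union> Q)" using l0(1) cspan_mono[of "F0 \<union> Q" "F \<union> Q"] by auto
        then show ?thesis using l0(2) by simp
      next
        case False
        then have FF0: "F \<subseteq> F0" using ch[OF F F0(1)] by blast
        obtain l c where lc: "l \<in> cspan cm (F \<union> Q)" "v = l + cm c p" using rep[OF F] by blast
        have lF0: "l \<in> cspan cm (F0 \<union> Q)" using lc(1) FF0 cspan_mono[of "F \<union> Q" "F0 \<union> Q"] by auto
        show ?thesis
        proof (cases "c = c0")
          case True then show ?thesis using lc by simp
        next
          case False
          have "cm (c - c0) p = l0 - l" using lc(2) l0(2) by (simp add: cm_diff_l algebra_simps)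
          then have "cm (c - c0) p \<in> cspan cm (F0 \<union> Q)" using csub_diff[OF cspan_csub l0(1) lF0] by simp
          then have "cm (inverse (c - c0)) (cm (c - c0) p) \<in> cspan cm (F0 \<union> Q)" using csub_cm[OF cspan_csub] by blast
          then have "p \<in> cspan cm (F0 \<union> Q)" using cm_inv[of "c - c0" p] False by simp
          then show ?thesis using F0(2) by blast
        qed
      qed
    qed
    then have "v - cm c0 p \<in> cspan cm (\<Inter>C \<union> Q)" using insert.IH by blast
    then show ?thesis using goal[of "v - cm c0 p" c0] by simp
  next
    case False
    have "v \<in> cspan cm (F \<union> Q)" if F: "F \<in> C" for F
    proof -
      have "p \<in> cspan cm (F \<union> Q)" using False F by blast
      then have A: "cspan cm (cspan cm (F \<union> Q) \<union> {p}) \<subseteq> cspan cm (F \<union> Q)"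
        using cspan_least[OF cspan_csub] by blast
      have "v \<in> cspan cm (F \<union> insert p Q)" using insert.prems F by blast
      then have B: "v \<in> cspan cm (cspan cm (F \<union> Q) \<union> {p})" unfolding span_ins[of F] .
      show ?thesis using A B by blast
    qed
    then have "v \<in> cspan cm (\<Inter>C \<union> Q)" using insert.IH by blast
    then show ?thesis using goal[of v 0] by simp
  qed
qed

end



lemma bop_add: "bop cm T \<Longrightarrow> T (x + y) = T x + T y"
  by (simp add: bop_def linear_add bounded_linear.linear)
lemma bop_0: "bop cm T \<Longrightarrow> T 0 = 0"
  by (simp add: bop_def linear_0 bounded_linear.linear)
lemma bop_diff: "bop cm T \<Longrightarrow> T (x - y) = T x - T y"
  by (simp add: bop_def linear_diff bounded_linear.linear)
lemma bop_cm: "bop cm T \<Longrightarrow> T (cm c x) = cm c (T x)"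
  by (simp add: bop_def)
lemma bop_bl: "bop cm T \<Longrightarrow> bounded_linear T"
  by (simp add: bop_def)

locale nctx = cbs cm for cm :: "complex \<Rightarrow> 'a::banach \<Rightarrow> 'a" +
  fixes N :: "'a set set" and J :: "('a \<Rightarrow> 'a) set"
  assumes nest: "nest cm N" and bim: "bimodule cm N J"
begin

lemma N_cs: "E \<in> N \<Longrightarrow> csubspace cm E" using nest by (simp add: nest_def)
lemma N_cl: "E \<in> N \<Longrightarrow> closed E" using nest by (simp add: nest_def)
lemma N_ch: "E \<in> N \<Longrightarrow> F \<in> N \<Longrightarrow> E \<subseteq> F \<or> F \<subseteq> E" using nest by (simp add: nest_def)
lemma N_meet: "S \<subseteq> N \<Longrightarrow> \<Inter>S \<in> N" using nest by (simp add: nest_def)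
lemma N_join: "S \<subseteq> N \<Longrightarrow> cclspan cm (\<Union>S) \<in> N" using nest by (simp add: nest_def)

lemma J_bop: "T \<in> J \<Longrightarrow> bop cm T" using bim by (simp add: bimodule_def)
lemma J_0: "(\<lambda>x. 0) \<in> J" using bim by (simp add: bimodule_def)
lemma J_add: "S \<in> J \<Longrightarrow> T \<in> J \<Longrightarrow> (\<lambda>x. S x + T x) \<in> J" using bim by (simp add: bimodule_def)
lemma J_cm: "T \<in> J \<Longrightarrow> (\<lambda>x. cm c (T x)) \<in> J" using bim by (simp add: bimodule_def)
lemma J_right: "A \<in> nest_alg cm N \<Longrightarrow> T \<in> J \<Longrightarrow> T \<circ> A \<in> J" using bim by (simp add: bimodule_def)

definition plus :: "'a set \<Rightarrow> 'a set" where "plus G = \<Inter>{F\<in>N. \<not> F \<subseteq> G}"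

lemma plus_N: "plus G \<in> N" unfolding plus_def by (rule N_meet) auto
lemma sub_plus: "G \<in> N \<Longrightarrow> G \<subseteq> plus G" unfolding plus_def using N_ch by blast
lemma plus_le: "F \<in> N \<Longrightarrow> \<not> F \<subseteq> G \<Longrightarrow> plus G \<subseteq> F" unfolding plus_def by blast

lemma rank_one:
  assumes G: "G \<in> N" and Q: "finite Q" and v: "v \<notin> cspan cm (G \<union> Q)" and y: "y \<in> plus G" and S: "S \<in> J"
  shows "\<exists>S'\<in>J. S' v = S y \<and> (\<forall>q\<in>Q. S' q = 0)"
proof -
  have clM: "closed (cspan cm (G \<union> Q))" by (rule closed_span_fin[OF Q N_cl[OF G] N_cs[OF G]])
  obtain f where f: "cdual cm f" "\<forall>m\<in>cspan cm (G \<union> Q). f m = 0" "f v = 1"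
    using chb[OF clM cspan_csub v] by blast
  define A where "A x = cm (f x) y" for x
  have blA: "bounded_linear A" unfolding A_def using bounded_linear_compose[OF bl_cm_l cdual_bl[OF f(1)]] .
  have "bop cm A" unfolding bop_def
  proof (intro conjI allI blA)
    show "A (cm c x) = cm c (A x)" for c x unfolding A_def by (simp add: cdual_cm[OF f(1)] cm_mult)
  qed
  moreover have "A ` E \<subseteq> E" if E: "E \<in> N" for E
  proof (cases "E \<subseteq> G")
    case True
    have "A x = 0" if "x \<in> E" for x
    proof -
      have "x \<in> cspan cm (G \<union> Q)" using that True cspan_sup[of "G \<union> Q"] by blast
      then show ?thesis unfolding A_def using f(2) by simp
    qed
    then show ?thesis using csub_0[OF N_cs[OF E]] by auto
  next
    case False
    then have "y \<in> E" using plus_le[OF E False] y by blast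
    then show ?thesis unfolding A_def using csub_cm[OF N_cs[OF E]] by auto
  qed
  ultimately have An: "A \<in> nest_alg cm N" unfolding nest_alg_def by blast
  have SA: "S \<circ> A \<in> J" by (rule J_right[OF An S])
  have "(S \<circ> A) v = S y" unfolding A_def using f(3) by simp
  moreover have "(S \<circ> A) q = 0" if "q \<in> Q" for q
  proof -
    have "q \<in> cspan cm (G \<union> Q)" using that cspan_sup[of "G \<union> Q"] by blast
    then have "A q = 0" unfolding A_def using f(2) by simp
    then show ?thesis using bop_0[OF J_bop[OF S]] by simp
  qed
  ultimately show ?thesis using SA by blast
qed

lemma key:
  assumes Q: "finite Q"
  shows "\<exists>k w. v = k + w \<and> w \<in> cspan cm Q \<and>
     (\<forall>T\<in>Mphi cm N (PhiJ cm J). T k \<in> closure {S v | S. S \<in> J \<and> (\<forall>q\<in>Q. S q = 0)})"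
proof -
  define D where "D = {G \<in> N. v \<notin> cspan cm (G \<union> Q)}"
  define U where "U = \<Union>(plus ` D)"
  define K where "K = cclspan cm U"
  have KN: "K \<in> N" unfolding K_def U_def by (rule N_join) (use plus_N in blast)
  have UK: "U \<subseteq> K" unfolding K_def cclspan_def using cspan_sup[of U] closure_subset by blast
  have vK: "v \<in> cspan cm (K \<union> Q)"
  proof (rule ccontr)
    assume nv: "v \<notin> cspan cm (K \<union> Q)"
    then have KD: "K \<in> D" unfolding D_def using KN by blast
    define C where "C = {F\<in>N. \<not> F \<subseteq> K}"
    have allF: "\<forall>F\<in>C. v \<in> cspan cm (F \<union> Q)"
    proof
      fix F assume F: "F \<in> C"
      show "v \<in> cspan cm (F \<union> Q)"
      proof (rule ccontr)
        assume "v \<notin> cspan cm (F \<union> Q)"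
        then have FD: "F \<in> D" using F unfolding C_def D_def by blast
        then have "plus F \<subseteq> U" unfolding U_def by blast
        then have "plus F \<subseteq> K" using UK by blast
        moreover have "F \<subseteq> plus F" using sub_plus F unfolding C_def by blast
        ultimately show False using F unfolding C_def by blast
      qed
    qed
    have chC: "\<And>F F'. F \<in> C \<Longrightarrow> F' \<in> C \<Longrightarrow> F \<subseteq> F' \<or> F' \<subseteq> F" unfolding C_def using N_ch by blast
    have csC: "\<And>F. F \<in> C \<Longrightarrow> csubspace cm F" unfolding C_def using N_cs by blast
    have v1: "v \<in> cspan cm (\<Inter>C \<union> Q)" by (rule chain_span[OF Q chC csC allF])
    have e1: "\<Inter>C = plus K" unfolding C_def plus_def by simp
    have "plus K \<subseteq> U" using KD unfolding U_def by blast
    then have "plus K \<subseteq> K" using UK by blast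
    then have "\<Inter>C \<union> Q \<subseteq> K \<union> Q" using e1 by blast
    then have "v \<in> cspan cm (K \<union> Q)" using v1 cspan_mono by blast
    then show False using nv by blast
  qed
  then obtain k w where kw: "v = k + w" "k \<in> K" "w \<in> cspan cm Q"
    unfolding cspan_sum[OF N_cs[OF KN]] by blast
  define R where "R = {S v | S. S \<in> J \<and> (\<forall>q\<in>Q. S q = 0)}"
  have csR: "csubspace cm R" unfolding csubspace_def
  proof (intro conjI ballI allI)
    show "0 \<in> R" unfolding R_def
      by (rule CollectI, rule exI[where x="\<lambda>x. 0"]) (simp add: J_0)
    fix x y assume "x \<in> R" "y \<in> R"
    then obtain S S' where "x = S v" "y = S' v" "S \<in> J" "S' \<in> J" "\<forall>q\<in>Q. S q = 0" "\<forall>q\<in>Q. S' q = 0"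
      unfolding R_def by blast
    then show "x + y \<in> R" unfolding R_def
      by (intro CollectI exI[where x="\<lambda>z. S z + S' z"]) (simp add: J_add)
  next
    fix c x assume "x \<in> R"
    then obtain S where "x = S v" "S \<in> J" "\<forall>q\<in>Q. S q = 0" unfolding R_def by blast
    then show "cm c x \<in> R" unfolding R_def
      by (intro CollectI exI[where x="\<lambda>z. cm c (S z)"]) (simp add: J_cm)
  qed
  have csR': "csubspace cm (closure R)" by (rule closure_csub[OF csR])
  have SK: "S y \<in> closure R" if S: "S \<in> J" and y: "y \<in> K" for S y
  proof -
    define Y where "Y = S -` closure R"
    have bS: "bop cm S" using J_bop[OF S] .
    have csY: "csubspace cm Y" unfolding Y_def csubspace_def
    proof (intro conjI ballI allI)
      show "0 \<in> S -` closure R" using csub_0[OF csR'] bop_0[OF bS] by simp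
      show "x + y \<in> S -` closure R" if "x \<in> S -` closure R" "y \<in> S -` closure R" for x y
        using that csub_add[OF csR'] bop_add[OF bS] by simp
      show "cm c x \<in> S -` closure R" if "x \<in> S -` closure R" for c x
        using that csub_cm[OF csR'] bop_cm[OF bS] by simp
    qed
    have clY: "closed Y" unfolding Y_def
      by (rule continuous_closed_vimage[OF closed_closure linear_continuous_at[OF bop_bl[OF bS]]])
    have "U \<subseteq> Y"
    proof
      fix z assume "z \<in> U"
      then obtain G where G: "G \<in> D" "z \<in> plus G" unfolding U_def by blast
      have G1: "G \<in> N" and G2: "v \<notin> cspan cm (G \<union> Q)" using G(1) unfolding D_def by auto
      obtain S' where S': "S' \<in> J" "S' v = S z" "\<forall>q\<in>Q. S' q = 0"
        using rank_one[OF G1 Q G2 G(2) S] by blast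
      have "S z \<in> R" unfolding R_def
        by (rule CollectI, rule exI[where x=S']) (use S' in auto)
      then show "z \<in> Y" unfolding Y_def using closure_subset by blast
    qed
    then have "cspan cm U \<subseteq> Y" by (rule cspan_least[OF csY])
    then have "K \<subseteq> Y" unfolding K_def cclspan_def by (rule closure_minimal[OF _ clY])
    then show ?thesis using y Y_def by blast
  qed
  have "T k \<in> closure R" if T: "T \<in> Mphi cm N (PhiJ cm J)" for T
  proof -
    have "T k \<in> PhiJ cm J K" using T kw(2) KN unfolding Mphi_def by blast
    moreover have "cspan cm {T x | T x. T \<in> J \<and> x \<in> K} \<subseteq> closure R"
      by (rule cspan_least[OF csR']) (use SK in blast)
    then have "PhiJ cm J K \<subseteq> closure R" unfolding PhiJ_def cclspan_def
      by (rule closure_minimal[OF _ closed_closure])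
    ultimately show ?thesis by blast
  qed
  then show ?thesis using kw unfolding R_def by (intro exI[where x=k] exI[where x=w]) auto
qed


lemma J_Mphi: assumes T: "T \<in> J" shows "T \<in> Mphi cm N (PhiJ cm J)"
proof -
  have A: "T x \<in> PhiJ cm J E" if "x \<in> E" for E x
  proof -
    have 1: "T x \<in> {S y | S y. S \<in> J \<and> y \<in> E}"
      by (rule CollectI, rule exI[where x=T], rule exI[where x=x]) (simp add: T that)
    have 2: "T x \<in> cspan cm {S y | S y. S \<in> J \<and> y \<in> E}" by (rule subsetD[OF cspan_sup 1])
    show ?thesis unfolding PhiJ_def cclspan_def by (rule subsetD[OF closure_subset 2])
  qed
  have "\<forall>E\<in>N. T ` E \<subseteq> PhiJ cm J E" using A by (intro ballI image_subsetI)
  then show ?thesis unfolding Mphi_def using J_bop[OF T] by (intro CollectI conjI)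
qed

lemma Mphi_diff:
  assumes T: "T \<in> Mphi cm N (PhiJ cm J)" and S: "S \<in> Mphi cm N (PhiJ cm J)"
  shows "(\<lambda>x. T x - S x) \<in> Mphi cm N (PhiJ cm J)"
proof -
  have bT: "bop cm T" and bS: "bop cm S" using T S unfolding Mphi_def by auto
  have "bop cm (\<lambda>x. T x - S x)" unfolding bop_def
  proof (intro conjI allI)
    show "bounded_linear (\<lambda>x. T x - S x)" by (rule bounded_linear_sub[OF bop_bl[OF bT] bop_bl[OF bS]])
    show "T (cm c x) - S (cm c x) = cm c (T x - S x)" for c x using bop_cm[OF bT] bop_cm[OF bS] cm_diff_r by simp
  qed
  moreover have "(\<lambda>x. T x - S x) ` E \<subseteq> PhiJ cm J E" if E: "E \<in> N" for E
  proof
    fix z assume "z \<in> (\<lambda>x. T x - S x) ` E"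
    then obtain x where x: "x \<in> E" "z = T x - S x" by blast
    have "T x \<in> PhiJ cm J E" "S x \<in> PhiJ cm J E" using T S E x(1) unfolding Mphi_def by blast+
    then show "z \<in> PhiJ cm J E" using x(2) csub_diff[OF cclspan_csub[of "{T x | T x. T \<in> J \<and> x \<in> E}"]] unfolding PhiJ_def by simp
  qed
  ultimately show ?thesis unfolding Mphi_def by blast
qed

lemma span_bound:
  assumes "w \<in> cspan cm Q"
  shows "\<exists>B\<ge>0. \<forall>L \<eta>. bop cm L \<longrightarrow> 0 \<le> \<eta> \<longrightarrow> (\<forall>q\<in>Q. norm (L q) \<le> \<eta>) \<longrightarrow> norm (L w) \<le> B * \<eta>"
proof -
  define W where "W = {w. \<exists>B\<ge>0. \<forall>L \<eta>. bop cm L \<longrightarrow> 0 \<le> \<eta> \<longrightarrow> (\<forall>q\<in>Q. norm (L q) \<le> \<eta>) \<longrightarrow> norm (L w) \<le> B * \<eta>}"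
  have "csubspace cm W" unfolding csubspace_def
  proof (intro conjI ballI allI)
    show "0 \<in> W" unfolding W_def by (intro CollectI exI[where x=0]) (simp add: bop_0)
    fix x y assume "x \<in> W" "y \<in> W"
    then obtain B1 B2 where B1: "B1 \<ge> 0" "\<forall>L \<eta>. bop cm L \<longrightarrow> 0 \<le> \<eta> \<longrightarrow> (\<forall>q\<in>Q. norm (L q) \<le> \<eta>) \<longrightarrow> norm (L x) \<le> B1 * \<eta>"
      and B2: "B2 \<ge> 0" "\<forall>L \<eta>. bop cm L \<longrightarrow> 0 \<le> \<eta> \<longrightarrow> (\<forall>q\<in>Q. norm (L q) \<le> \<eta>) \<longrightarrow> norm (L y) \<le> B2 * \<eta>"
      unfolding W_def by blast
    show "x + y \<in> W" unfolding W_def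
    proof (intro CollectI exI[where x="B1 + B2"] conjI allI impI)
      show "0 \<le> B1 + B2" using B1 B2 by simp
      fix L \<eta> assume h: "bop cm L" "0 \<le> \<eta>" "\<forall>q\<in>Q. norm (L q) \<le> \<eta>"
      have "norm (L (x + y)) \<le> norm (L x) + norm (L y)" using bop_add[OF h(1)] norm_triangle_ineq by simp
      also have "\<dots> \<le> B1 * \<eta> + B2 * \<eta>"
      proof (rule add_mono)
        show "norm (L x) \<le> B1 * \<eta>" using B1(2) h by blast
        show "norm (L y) \<le> B2 * \<eta>" using B2(2) h by blast
      qed
      finally show "norm (L (x + y)) \<le> (B1 + B2) * \<eta>" by (simp add: algebra_simps)
    qed
  next
    fix c x assume "x \<in> W"
    then obtain B1 where B1: "B1 \<ge> 0" "\<forall>L \<eta>. bop cm L \<longrightarrow> 0 \<le> \<eta> \<longrightarrow> (\<forall>q\<in>Q. norm (L q) \<le> \<eta>) \<longrightarrow> norm (L x) \<le> B1 * \<eta>"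
      unfolding W_def by blast
    show "cm c x \<in> W" unfolding W_def
    proof (intro CollectI exI[where x="cmod c * B1"] conjI allI impI)
      show "0 \<le> cmod c * B1" using B1 by simp
      fix L \<eta> assume h: "bop cm L" "0 \<le> \<eta>" "\<forall>q\<in>Q. norm (L q) \<le> \<eta>"
      have "norm (L (cm c x)) = cmod c * norm (L x)" using bop_cm[OF h(1)] cm_norm by simp
      also have "\<dots> \<le> cmod c * (B1 * \<eta>)"
      proof (rule mult_left_mono)
        show "norm (L x) \<le> B1 * \<eta>" using B1(2) h by blast
      qed simp
      finally show "norm (L (cm c x)) \<le> cmod c * B1 * \<eta>" by (simp add: algebra_simps)
    qed
  qed
  moreover have "Q \<subseteq> W"
  proof
    fix q assume q: "q \<in> Q"
    show "q \<in> W" unfolding W_def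
    proof (intro CollectI exI[where x=1] conjI allI impI)
      fix L \<eta> assume "bop cm L" "0 \<le> (\<eta>::real)" "\<forall>q\<in>Q. norm (L q) \<le> \<eta>"
      then show "norm (L q) \<le> 1 * \<eta>" using q by simp
    qed simp
  qed
  ultimately have "cspan cm Q \<subseteq> W" by (rule cspan_least)
  then have "w \<in> W" using assms by blast
  then show ?thesis unfolding W_def by (rule CollectD)
qed

lemma approx:
  assumes "finite P"
  shows "\<forall>T \<delta>. T \<in> Mphi cm N (PhiJ cm J) \<longrightarrow> \<delta> > 0 \<longrightarrow> (\<exists>S\<in>J. \<forall>x\<in>P. norm (S x - T x) < \<delta>)"
  using assms
proof (induction P)
  case empty then show ?case using J_0 by blast
next
  case (insert v Q)
  show ?case
  proof (intro allI impI)
    fix T and \<delta> :: real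
    assume T: "T \<in> Mphi cm N (PhiJ cm J)" and d: "\<delta> > 0"
    obtain k w where kw: "v = k + w" "w \<in> cspan cm Q"
      and cl: "\<forall>T\<in>Mphi cm N (PhiJ cm J). T k \<in> closure {S v | S. S \<in> J \<and> (\<forall>q\<in>Q. S q = 0)}"
      using key[OF insert.hyps(1)] by blast
    obtain B where B: "B \<ge> 0" "\<forall>L \<eta>. bop cm L \<longrightarrow> 0 \<le> \<eta> \<longrightarrow> (\<forall>q\<in>Q. norm (L q) \<le> \<eta>) \<longrightarrow> norm (L w) \<le> B * \<eta>"
      using span_bound[OF kw(2)] by blast
    define d' where "d' = \<delta> / (2 * (B + 1))"
    have d': "d' > 0" unfolding d'_def using d B by simp
    have d'le: "d' \<le> \<delta> / 2" unfolding d'_def using d B by (intro divide_left_mono) auto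
    have Bd: "B * d' < \<delta> / 2"
    proof -
      have "B * d' = \<delta> / 2 * (B / (B + 1))" unfolding d'_def using B by (simp add: field_simps)
      also have "\<dots> < \<delta> / 2 * 1"
      proof (rule mult_strict_left_mono)
        show "B / (B + 1) < 1" using B by simp
      qed (use d in simp)
      finally show ?thesis by simp
    qed
    obtain S' where S': "S' \<in> J" "\<forall>q\<in>Q. norm (S' q - T q) < d'" using insert.IH T d' by blast
    define T2 where "T2 x = T x - S' x" for x
    have T2: "T2 \<in> Mphi cm N (PhiJ cm J)" unfolding T2_def by (rule Mphi_diff[OF T J_Mphi[OF S'(1)]])
    have bT2: "bop cm T2" using T2 unfolding Mphi_def by blast
    have "T2 k \<in> closure {S v | S. S \<in> J \<and> (\<forall>q\<in>Q. S q = 0)}" using cl T2 by blast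
    then obtain y where "y \<in> {S v | S. S \<in> J \<and> (\<forall>q\<in>Q. S q = 0)}" "dist y (T2 k) < \<delta> / 2"
      using d unfolding closure_approachable by (meson half_gt_zero)
    then obtain S where S: "S \<in> J" "\<forall>q\<in>Q. S q = 0" "dist (S v) (T2 k) < \<delta> / 2" by blast
    have "\<forall>q\<in>Q. norm (T2 q) \<le> d'" using S'(2) unfolding T2_def by (simp add: norm_minus_commute less_imp_le)
    then have nw: "norm (T2 w) \<le> B * d'" using B(2) bT2 d' by simp
    define St where "St x = S x + S' x" for x
    have St: "St \<in> J" unfolding St_def using J_add[OF S(1) S'(1)] .
    have "norm (St x - T x) < \<delta>" if x: "x \<in> insert v Q" for x
    proof (cases "x = v")
      case True
      have "T2 v = T2 k + T2 w" using kw(1) bop_add[OF bT2] by simp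
      then have "St v - T v = (S v - T2 k) - T2 w" unfolding St_def T2_def by (simp add: algebra_simps)
      then have "norm (St v - T v) \<le> norm (S v - T2 k) + norm (T2 w)" by (metis norm_triangle_ineq4)
      also have "\<dots> < \<delta> / 2 + \<delta> / 2" using S(3) nw Bd by (simp add: dist_norm)
      finally show ?thesis using True by simp
    next
      case False
      then have q: "x \<in> Q" using x by blast
      then have "St x - T x = S' x - T x" unfolding St_def using S(2) by simp
      moreover have "norm (S' x - T x) < d'" using S'(2) q by blast
      ultimately show ?thesis using d'le d by simp
    qed
    then show "\<exists>S\<in>J. \<forall>x\<in>insert v Q. norm (S x - T x) < \<delta>" using St by blast
  qed
qed

lemma Mphi_J:
  assumes wot: "wot_closed cm J" and T: "T \<in> Mphi cm N (PhiJ cm J)"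
  shows "T \<in> J"
proof -
  have bT: "bop cm T" using T unfolding Mphi_def by blast
  have "\<forall>e>0. \<exists>S\<in>J. \<forall>(x,\<phi>)\<in>F. cmod (\<phi> (S x) - \<phi> (T x)) < e"
    if F: "finite F" "\<forall>(x,\<phi>)\<in>F. cdual cm \<phi>" for F :: "('a \<times> ('a \<Rightarrow> complex)) set"
  proof (intro allI impI)
    fix e :: real assume e: "e > 0"
    define Kf where "Kf \<phi> = (SOME K. \<forall>x. cmod (\<phi> x) \<le> K * norm x)" for \<phi> :: "'a \<Rightarrow> complex"
    have Kf: "cmod (\<phi> x) \<le> Kf \<phi> * norm x" if "cdual cm \<phi>" for \<phi> x
    proof -
      have "\<exists>K. \<forall>x. cmod (\<phi> x) \<le> K * norm x" using that by (simp add: cdual_def)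
      then have "\<forall>x. cmod (\<phi> x) \<le> Kf \<phi> * norm x" unfolding Kf_def by (rule someI_ex)
      then show ?thesis by blast
    qed
    define B where "B = 1 + (\<Sum>p\<in>F. \<bar>Kf (snd p)\<bar>)"
    have B1: "\<bar>Kf \<phi>\<bar> \<le> B - 1" if "(x,\<phi>) \<in> F" for x \<phi>
    proof -
      have "\<bar>Kf (snd (x,\<phi>))\<bar> \<le> (\<Sum>p\<in>F. \<bar>Kf (snd p)\<bar>)"
        by (rule member_le_sum[OF that _ F(1)]) simp
      then show ?thesis unfolding B_def by simp
    qed
    have Bpos: "B \<ge> 1" unfolding B_def by (simp add: sum_nonneg)
    define \<delta> where "\<delta> = e / B"
    have dpos: "\<delta> > 0" unfolding \<delta>_def using e Bpos by simp
    obtain S where S: "S \<in> J" "\<forall>x\<in>fst ` F. norm (S x - T x) < \<delta>"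
      using approx[of "fst ` F"] F(1) T dpos by blast
    have "cmod (\<phi> (S x) - \<phi> (T x)) < e" if xF: "(x,\<phi>) \<in> F" for x \<phi>
    proof -
      have cd: "cdual cm \<phi>" using F(2) xF by blast
      have "\<phi> (S x) = \<phi> (S x - T x) + \<phi> (T x)" using cdual_add[OF cd, of "S x - T x" "T x"] by simp
      then have "cmod (\<phi> (S x) - \<phi> (T x)) = cmod (\<phi> (S x - T x))" by simp
      also have "\<dots> \<le> Kf \<phi> * norm (S x - T x)" by (rule Kf[OF cd])
      also have "\<dots> \<le> \<bar>Kf \<phi>\<bar> * norm (S x - T x)" by (simp add: mult_right_mono)
      also have "\<dots> \<le> (B - 1) * norm (S x - T x)" using B1[OF xF] by (simp add: mult_right_mono)
      also have "\<dots> \<le> (B - 1) * \<delta>"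
        using S(2) xF Bpos by (intro mult_left_mono) (force intro: less_imp_le)+
      also have "\<dots> < B * \<delta>" using dpos by (simp add: algebra_simps)
      also have "B * \<delta> = e" unfolding \<delta>_def using Bpos by simp
      finally show ?thesis .
    qed
    then show "\<exists>S\<in>J. \<forall>(x,\<phi>)\<in>F. cmod (\<phi> (S x) - \<phi> (T x)) < e" using S(1) by blast
  qed
  then show ?thesis using wot bT unfolding wot_closed_def by blast
qed

end


theorem mainTheorem11:
  fixes cm :: "complex \<Rightarrow> 'a::banach \<Rightarrow> 'a"
    and N :: "'a set set"
    and J :: "('a \<Rightarrow> 'a) set"
  assumes "cbanach cm"
    and "nest cm N"
    and "bimodule cm N J"
    and "wot_closed cm J"
  shows "{T \<in> J. finite_rank cm T} = {T \<in> Mphi cm N (PhiJ cm J). finite_rank cm T}"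
proof -
  interpret nctx cm N J
    using assms(1-3) by (simp add: nctx_def cbs_def nctx_axioms_def)
  show ?thesis
  proof (rule equalityI)
    show "{T \<in> J. finite_rank cm T} \<subseteq> {T \<in> Mphi cm N (PhiJ cm J). finite_rank cm T}"
      using J_Mphi by blast
    show "{T \<in> Mphi cm N (PhiJ cm J). finite_rank cm T} \<subseteq> {T \<in> J. finite_rank cm T}"
      using Mphi_J[OF assms(4)] by blast
  qed
qed

end
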